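(* Let $(X_1,d_1)$, $(X_2,d_2)$ be proper CAT(0) spaces, let $\Gamma$ be an infinite group acting convex co-compactly by isometries on $X_1$ and on $X_2$ via homomorphisms $\rho_i:\Gamma\to\mathrm{Isom}(X_i)$, and suppose the diagonal action $\rho=(\rho_1,\rho_2)$ of $\Gamma$ on $X_1\times X_2$ is convex co-compact, with $C\subset X_1\times X_2$ a nonempty $\rho(\Gamma)$-invariant convex subset such that $C/\rho(\Gamma)$ is compact. Fix $x=(x_1,x_2)\in C$, and for $i=1,2$ let $l_i$ be a complete geodesic line in $X_i$ through $x_i$. Let $F=l_1\times l_2$ (a flat isometric to the Euclidean plane) and $C_F=F\cap C$. If $C_F$ has infinite diameter, then $C_F$ lies within finite Hausdorff distance of a geodesic ray or of a complete geodesic line in $F$.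
   Context: $X_1\times X_2$ carries the product metric $\sqrt{d_1^2+d_2^2}$. A properly discontinuous isometric action on a proper CAT(0) space $X$ is convex co-compact if there is a nonempty closed invariant convex subset with compact quotient. *)

theory Defs
  imports "HOL-Analysis.Analysis" "HOL-Algebra.Group"
begin

text \<open>A metric space is modelled by a type of class metric_space (the whole type is the space).
  On a product type the library metric is dist = sqrt (d1^2 + d2^2).\<close>

definition geodesic_path :: "'a::metric_space \<Rightarrow> 'a \<Rightarrow> (real \<Rightarrow> 'a) \<Rightarrow> bool" where
  "geodesic_path x y c \<longleftrightarrow> c 0 = x \<and> c 1 = y \<and>
     (\<forall>s\<in>{0..1}. \<forall>t\<in>{0..1}. dist (c s) (c t) = \<bar>s - t\<bar> * dist x y)"

definition geodesic_space :: "'a::metric_space itself \<Rightarrow> bool" where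
  "geodesic_space _ \<longleftrightarrow> (\<forall>x y::'a. \<exists>c. geodesic_path x y c)"

text \<open>Points of a side of a geodesic triangle paired with their comparison points in the Euclidean plane.\<close>
definition side_pairs :: "(real \<Rightarrow> 'a) \<Rightarrow> complex \<Rightarrow> complex \<Rightarrow> ('a \<times> complex) set" where
  "side_pairs c x' y' = {(c t, x' + of_real t * (y' - x')) | t. t \<in> {0..1}}"

definition CAT0 :: "'a::metric_space itself \<Rightarrow> bool" where
  "CAT0 T \<longleftrightarrow> geodesic_space T \<and>
    (\<forall>(x::'a) y z c1 c2 c3 x' y' z'.
       geodesic_path x y c1 \<and> geodesic_path y z c2 \<and> geodesic_path z x c3 \<and>
       dist x' y' = dist x y \<and> dist y' z' = dist y z \<and> dist z' x' = dist z x \<longrightarrow>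
       (\<forall>(p, p') \<in> side_pairs c1 x' y' \<union> side_pairs c2 y' z' \<union> side_pairs c3 z' x'.
        \<forall>(q, q') \<in> side_pairs c1 x' y' \<union> side_pairs c2 y' z' \<union> side_pairs c3 z' x'.
          dist p q \<le> dist p' q'))"

definition proper_space :: "'a::metric_space itself \<Rightarrow> bool" where
  "proper_space _ \<longleftrightarrow> (\<forall>(x::'a) r. compact (cball x r))"

definition isometry :: "('a::metric_space \<Rightarrow> 'a) \<Rightarrow> bool" where
  "isometry f \<longleftrightarrow> bij f \<and> (\<forall>x y. dist (f x) (f y) = dist x y)"

definition isometric_action :: "('g, 'm) monoid_scheme \<Rightarrow> ('g \<Rightarrow> 'a::metric_space \<Rightarrow> 'a) \<Rightarrow> bool" where
  "isometric_action G \<rho> \<longleftrightarrow> group G \<and>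
     (\<forall>g\<in>carrier G. isometry (\<rho> g)) \<and>
     (\<forall>g\<in>carrier G. \<forall>h\<in>carrier G. \<rho> (g \<otimes>\<^bsub>G\<^esub> h) = \<rho> g \<circ> \<rho> h) \<and>
     \<rho> \<one>\<^bsub>G\<^esub> = id"

definition properly_discontinuous :: "('g, 'm) monoid_scheme \<Rightarrow> ('g \<Rightarrow> 'a::metric_space \<Rightarrow> 'a) \<Rightarrow> bool" where
  "properly_discontinuous G \<rho> \<longleftrightarrow>
     (\<forall>K. compact K \<longrightarrow> finite {g \<in> carrier G. \<rho> g ` K \<inter> K \<noteq> {}})"

definition convex_in :: "'a::metric_space set \<Rightarrow> bool" where
  "convex_in C \<longleftrightarrow> (\<forall>x\<in>C. \<forall>y\<in>C. \<forall>c. geodesic_path x y c \<longrightarrow> c ` {0..1} \<subseteq> C)"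

definition invariant_set :: "('g, 'm) monoid_scheme \<Rightarrow> ('g \<Rightarrow> 'a \<Rightarrow> 'a) \<Rightarrow> 'a set \<Rightarrow> bool" where
  "invariant_set G \<rho> C \<longleftrightarrow> (\<forall>g\<in>carrier G. \<rho> g ` C \<subseteq> C)"

text \<open>C / rho(G) is compact in the quotient topology: open sets of the orbit space correspond
  exactly to G-invariant relatively open subsets of C, so compactness of the quotient means every
  cover of C by invariant relatively open sets has a finite subcover.\<close>
definition compact_quotient :: "('g, 'm) monoid_scheme \<Rightarrow> ('g \<Rightarrow> 'a::metric_space \<Rightarrow> 'a) \<Rightarrow> 'a set \<Rightarrow> bool" where
  "compact_quotient G \<rho> C \<longleftrightarrow>
     (\<forall>\<U>. (\<forall>U\<in>\<U>. openin (top_of_set C) U \<and> invariant_set G \<rho> U) \<and> C \<subseteq> \<Union>\<U> \<longrightarrow>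
        (\<exists>\<F>\<subseteq>\<U>. finite \<F> \<and> C \<subseteq> \<Union>\<F>))"

definition convex_cocompact_witness :: "('g, 'm) monoid_scheme \<Rightarrow> ('g \<Rightarrow> 'a::metric_space \<Rightarrow> 'a) \<Rightarrow> 'a set \<Rightarrow> bool" where
  "convex_cocompact_witness G \<rho> C \<longleftrightarrow>
     C \<noteq> {} \<and> closed C \<and> convex_in C \<and> invariant_set G \<rho> C \<and> compact_quotient G \<rho> C"

definition convex_cocompact :: "('g, 'm) monoid_scheme \<Rightarrow> ('g \<Rightarrow> 'a::metric_space \<Rightarrow> 'a) \<Rightarrow> bool" where
  "convex_cocompact G \<rho> \<longleftrightarrow> isometric_action G \<rho> \<and> properly_discontinuous G \<rho> \<and>
     (\<exists>C. convex_cocompact_witness G \<rho> C)"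

definition diagonal_action :: "('g \<Rightarrow> 'a \<Rightarrow> 'a) \<Rightarrow> ('g \<Rightarrow> 'b \<Rightarrow> 'b) \<Rightarrow> 'g \<Rightarrow> 'a \<times> 'b \<Rightarrow> 'a \<times> 'b" where
  "diagonal_action \<rho>1 \<rho>2 g p = (\<rho>1 g (fst p), \<rho>2 g (snd p))"

definition geodesic_line :: "(real \<Rightarrow> 'a::metric_space) \<Rightarrow> bool" where
  "geodesic_line l \<longleftrightarrow> (\<forall>s t. dist (l s) (l t) = \<bar>s - t\<bar>)"

definition geodesic_ray :: "(real \<Rightarrow> 'a::metric_space) \<Rightarrow> bool" where
  "geodesic_ray r \<longleftrightarrow> (\<forall>s\<ge>0. \<forall>t\<ge>0. dist (r s) (r t) = \<bar>s - t\<bar>)"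

definition finite_hausdorff_dist :: "'a::metric_space set \<Rightarrow> 'a set \<Rightarrow> bool" where
  "finite_hausdorff_dist A B \<longleftrightarrow> (\<exists>R. (\<forall>a\<in>A. \<exists>b\<in>B. dist a b \<le> R) \<and> (\<forall>b\<in>B. \<exists>a\<in>A. dist a b \<le> R))"

end

theory Submission
  imports Defs
begin

lemma gl_dist: "geodesic_line l \<Longrightarrow> dist (l s) (l t) = \<bar>s - t\<bar>"
  by (simp add: geodesic_line_def)

lemma distF:
  assumes "geodesic_line l1" "geodesic_line l2"
  shows "dist (l1 a, l2 b) (l1 a', l2 b') = sqrt ((a - a')\<^sup>2 + (b - b')\<^sup>2)"
  using assms by (simp add: dist_Pair_Pair gl_dist)

lemma recession:
  fixes P :: "real \<Rightarrow> real \<Rightarrow> bool"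
  assumes conv: "\<And>a b a' b' t. P a b \<Longrightarrow> P a' b' \<Longrightarrow> 0 \<le> t \<Longrightarrow> t \<le> 1 \<Longrightarrow> P (a + t * (a' - a)) (b + t * (b' - b))"
    and clo: "\<And>\<alpha> \<beta> a b. \<alpha> \<longlonglongrightarrow> a \<Longrightarrow> \<beta> \<longlonglongrightarrow> b \<Longrightarrow> eventually (\<lambda>n. P (\<alpha> n) (\<beta> n)) sequentially \<Longrightarrow> P a b"
    and unb: "\<And>e. \<exists>a b. P a b \<and> sqrt ((a - a0)\<^sup>2 + (b - b0)\<^sup>2) > e"
  shows "\<exists>u1 u2. u1\<^sup>2 + u2\<^sup>2 = 1 \<and> (\<forall>a b t. P a b \<longrightarrow> 0 \<le> t \<longrightarrow> P (a + t * u1) (b + t * u2))"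
proof -
  have "\<forall>n. \<exists>a b. P a b \<and> sqrt ((a - a0)\<^sup>2 + (b - b0)\<^sup>2) > real n + 1"
    using unb by blast
  then obtain \<alpha> \<beta> where ab: "\<And>n. P (\<alpha> n) (\<beta> n)" "\<And>n. sqrt ((\<alpha> n - a0)\<^sup>2 + (\<beta> n - b0)\<^sup>2) > real n + 1"
    by metis
  define L where "L n = sqrt ((\<alpha> n - a0)\<^sup>2 + (\<beta> n - b0)\<^sup>2)" for n
  have Lgt: "L n > real n" "L n > 0" for n using ab(2)[of n] unfolding L_def by linarith+
  define v where "v n = ((\<alpha> n - a0) / L n, (\<beta> n - b0) / L n)" for n
  have vs: "v n \<in> sphere (0::real\<times>real) 1" for n
  proof -
    have "(\<alpha> n - a0)\<^sup>2 + (\<beta> n - b0)\<^sup>2 = (L n)\<^sup>2" unfolding L_def by simp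
    then have "((\<alpha> n - a0) / L n)\<^sup>2 + ((\<beta> n - b0) / L n)\<^sup>2 = 1"
      using Lgt(2)[of n] by (simp add: power_divide add_divide_distrib[symmetric])
    then show ?thesis by (simp add: v_def norm_Pair power_divide)
  qed
  obtain l r where lr: "l \<in> sphere (0::real\<times>real) 1" "strict_mono (r :: nat \<Rightarrow> nat)" "(v \<circ> r) \<longlonglongrightarrow> l"
    using seq_compactE[OF compact_imp_seq_compact[OF compact_sphere] ] vs by metis
  define u1 where "u1 = fst l"
  define u2 where "u2 = snd l"
  have u: "u1\<^sup>2 + u2\<^sup>2 = 1" using lr(1) by (cases l) (simp add: u1_def u2_def norm_Pair)
  have v1: "(\<lambda>n. fst (v (r n))) \<longlonglongrightarrow> u1" unfolding u1_def using tendsto_fst[OF lr(3)] by (simp add: o_def)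
  have v2: "(\<lambda>n. snd (v (r n))) \<longlonglongrightarrow> u2" unfolding u2_def using tendsto_snd[OF lr(3)] by (simp add: o_def)
  have Lr: "filterlim (\<lambda>n. L (r n)) at_top sequentially"
  proof (rule filterlim_at_top_mono[OF filterlim_real_sequentially])
    show "\<forall>\<^sub>F n in sequentially. real n \<le> L (r n)"
      by (rule always_eventually) (metis Lgt(1) seq_suble[OF lr(2)] of_nat_le_iff less_imp_le order.trans)
  qed
  have "P (a + t * u1) (b + t * u2)" if "P a b" "0 \<le> t" for a b t
  proof -
    define lam where "lam n = t / L (r n)" for n
    have l0: "lam \<longlonglongrightarrow> 0" unfolding lam_def
      by (rule tendsto_divide_0[OF tendsto_const filterlim_at_top_imp_at_infinity[OF Lr]])
    have ev: "eventually (\<lambda>n. lam n \<le> 1) sequentially"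
      using Lr unfolding filterlim_at_top
      apply (drule_tac x=t in spec)
      apply (erule eventually_mono)
      using that(2) Lgt(2) by (simp add: lam_def)
    have "eventually (\<lambda>n. P (a + lam n * (\<alpha> (r n) - a)) (b + lam n * (\<beta> (r n) - b))) sequentially"
      using ev apply (rule eventually_mono)
      apply (rule conv[OF that(1) ab(1)])
      using that(2) Lgt(2) by (auto simp: lam_def)
    moreover have e1: "lam n * (\<alpha> (r n) - a) = t * fst (v (r n)) + lam n * (a0 - a)" for n
      using Lgt(2)[of "r n"] by (simp add: lam_def v_def field_simps)
    moreover have e2: "lam n * (\<beta> (r n) - b) = t * snd (v (r n)) + lam n * (b0 - b)" for n
      using Lgt(2)[of "r n"] by (simp add: lam_def v_def field_simps)
    moreover have "(\<lambda>n. a + (t * fst (v (r n)) + lam n * (a0 - a))) \<longlonglongrightarrow> a + (t * u1 + 0 * (a0 - a))"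
      by (intro tendsto_intros v1 l0)
    moreover have "(\<lambda>n. b + (t * snd (v (r n)) + lam n * (b0 - b))) \<longlonglongrightarrow> b + (t * u2 + 0 * (b0 - b))"
      by (intro tendsto_intros v2 l0)
    ultimately show ?thesis using clo[of "\<lambda>n. a + lam n * (\<alpha> (r n) - a)" "a + t * u1" "\<lambda>n. b + lam n * (\<beta> (r n) - b)" "b + t * u2"]
      by simp
  qed
  with u show ?thesis by blast
qed

lemma strip:
  fixes P :: "real \<Rightarrow> real \<Rightarrow> bool"
  assumes rec: "\<And>a b t. P a b \<Longrightarrow> 0 \<le> t \<Longrightarrow> P (a + t * u1) (b + t * u2)"
    and u: "u1\<^sup>2 + u2\<^sup>2 = 1" and p0: "P a0 b0"
    and fib1: "\<And>a b b'. P a b \<Longrightarrow> P a b' \<Longrightarrow> \<bar>b - b'\<bar> \<le> M"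
    and fib2: "\<And>a a' b. P a b \<Longrightarrow> P a' b \<Longrightarrow> \<bar>a - a'\<bar> \<le> M"
    and q: "P a b"
  shows "\<bar>(a - a0) * u2 - (b - b0) * u1\<bar> \<le> M"
proof -
  have M0: "0 \<le> M" using fib1[OF p0 p0] by simp
  have "u1\<^sup>2 \<le> 1" "u2\<^sup>2 \<le> 1" using u zero_le_power2[of u1] zero_le_power2[of u2] by linarith+
  then have a1: "\<bar>u1\<bar> \<le> 1" "\<bar>u2\<bar> \<le> 1" by (simp_all add: abs_square_le_1)
  show ?thesis
  proof (cases "u1 = 0")
    case False
    define s where "s = \<bar>(a - a0) / u1\<bar>"
    define t where "t = s + (a - a0) / u1"
    have st: "0 \<le> s" "0 \<le> t" unfolding s_def t_def using abs_ge_minus_self[of "(a - a0) / u1"] by linarith+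
    have P1: "P (a0 + t * u1) (b0 + t * u2)" by (rule rec[OF p0 st(2)])
    have P2: "P (a + s * u1) (b + s * u2)" by (rule rec[OF q st(1)])
    have eq: "a0 + t * u1 = a + s * u1" using False by (simp add: t_def field_simps)
    have d: "\<bar>(b0 + t * u2) - (b + s * u2)\<bar> \<le> M" using fib1[OF P1 P2[folded eq]] .
    have w: "(a - a0) * u2 - (b - b0) * u1 = u1 * ((b0 + t * u2) - (b + s * u2))"
      using False by (simp add: t_def field_simps)
    have "\<bar>u1 * ((b0 + t * u2) - (b + s * u2))\<bar> \<le> 1 * M"
      unfolding abs_mult by (rule mult_mono[OF a1(1) d]) (auto simp: M0)
    then show ?thesis using w by simp
  next
    case True
    then have F: "u2 \<noteq> 0" using u by auto
    define s where "s = \<bar>(b - b0) / u2\<bar>"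
    define t where "t = s + (b - b0) / u2"
    have st: "0 \<le> s" "0 \<le> t" unfolding s_def t_def using abs_ge_minus_self[of "(b - b0) / u2"] by linarith+
    have P1: "P (a0 + t * u1) (b0 + t * u2)" by (rule rec[OF p0 st(2)])
    have P2: "P (a + s * u1) (b + s * u2)" by (rule rec[OF q st(1)])
    have eq: "b0 + t * u2 = b + s * u2" using F by (simp add: t_def field_simps)
    have d: "\<bar>(a0 + t * u1) - (a + s * u1)\<bar> \<le> M" using fib2[OF P1 P2[folded eq]] .
    have w: "(a - a0) * u2 - (b - b0) * u1 = - (u2 * ((a0 + t * u1) - (a + s * u1)))"
      using F by (simp add: t_def field_simps)
    have "\<bar>u2 * ((a0 + t * u1) - (a + s * u1))\<bar> \<le> 1 * M"
      unfolding abs_mult by (rule mult_mono[OF a1(2) d]) (auto simp: M0)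
    then show ?thesis using w by simp
  qed
qed

lemma key_id:
  fixes a b a0 b0 u1 u2 \<sigma> :: real
  assumes u: "u1\<^sup>2 + u2\<^sup>2 = 1"
  shows "(a - (a0 + \<sigma> * u1))\<^sup>2 + (b - (b0 + \<sigma> * u2))\<^sup>2
     = ((a - a0) * u2 - (b - b0) * u1)\<^sup>2 + ((a - a0) * u1 + (b - b0) * u2 - \<sigma>)\<^sup>2"
  using u by algebra

lemma sqrt_sum_le: "sqrt (x\<^sup>2 + y\<^sup>2) \<le> \<bar>x\<bar> + \<bar>y\<bar>"
  by (rule real_le_lsqrt) (auto simp: power2_eq_square abs_mult_self_eq algebra_simps)

lemma iso_act_facts:
  assumes "isometric_action G \<rho>"
  shows "group G" "\<And>g. g \<in> carrier G \<Longrightarrow> dist (\<rho> g p) (\<rho> g q) = dist p q"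
    "\<And>g h. g \<in> carrier G \<Longrightarrow> h \<in> carrier G \<Longrightarrow> \<rho> (g \<otimes>\<^bsub>G\<^esub> h) y = \<rho> g (\<rho> h y)"
    "\<rho> \<one>\<^bsub>G\<^esub> y = y"
  using assms unfolding isometric_action_def isometry_def by auto

lemma cover_bound:
  assumes act: "isometric_action G \<rho>" and W: "convex_cocompact_witness G \<rho> C" and x: "x \<in> C"
  shows "\<exists>D. \<forall>c\<in>C. \<exists>g\<in>carrier G. dist c (\<rho> g x) < D"
proof -
  note F = iso_act_facts[OF act]
  interpret group G by (rule F(1))
  have invC: "invariant_set G \<rho> C" and cq: "compact_quotient G \<rho> C"
    using W unfolding convex_cocompact_witness_def by auto
  define U where "U n = {c\<in>C. \<exists>g\<in>carrier G. dist c (\<rho> g x) < real n}" for n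
  have op: "openin (top_of_set C) (U n)" for n
  proof -
    have "U n = C \<inter> (\<Union>g\<in>carrier G. ball (\<rho> g x) (real n))"
      by (auto simp: U_def dist_commute)
    then show ?thesis by auto
  qed
  have inv: "invariant_set G \<rho> (U n)" for n
    unfolding invariant_set_def
  proof (intro ballI subsetI)
    fix h y assume h: "h \<in> carrier G" and "y \<in> \<rho> h ` U n"
    then obtain c g where c: "c \<in> C" "g \<in> carrier G" "dist c (\<rho> g x) < real n" "y = \<rho> h c"
      by (auto simp: U_def)
    have "y \<in> C" using invC h c unfolding invariant_set_def by auto
    moreover have "dist y (\<rho> (h \<otimes>\<^bsub>G\<^esub> g) x) < real n"
      using c h F(2,3) by simp
    moreover have "h \<otimes>\<^bsub>G\<^esub> g \<in> carrier G" using h c by simp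
    ultimately show "y \<in> U n" unfolding U_def by blast
  qed
  have cov: "C \<subseteq> \<Union>(range U)"
  proof
    fix c assume c: "c \<in> C"
    obtain n where "dist c x < real n" using reals_Archimedean2 by blast
    then have "c \<in> U n" unfolding U_def using c F(4) by (auto intro!: bexI[of _ "\<one>\<^bsub>G\<^esub>"])
    then show "c \<in> \<Union>(range U)" by blast
  qed
  obtain \<F> where \<F>: "\<F> \<subseteq> range U" "finite \<F>" "C \<subseteq> \<Union>\<F>"
  proof -
    have "(\<forall>V\<in>range U. openin (top_of_set C) V \<and> invariant_set G \<rho> V) \<and> C \<subseteq> \<Union>(range U)"
      using op inv cov by blast
    then have "\<exists>\<F>\<subseteq>range U. finite \<F> \<and> C \<subseteq> \<Union>\<F>"
      using cq unfolding compact_quotient_def by blast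
    then show ?thesis using that by blast
  qed
  obtain N where N: "finite N" "\<F> = U ` N" using finite_subset_image[OF \<F>(2,1)] by blast
  obtain m where m: "\<forall>n\<in>N. n \<le> m" using N(1) finite_nat_set_iff_bounded_le by blast
  show ?thesis
  proof (intro exI ballI)
    fix c assume "c \<in> C"
    then obtain n where "n \<in> N" "c \<in> U n" using \<F>(3) N(2) by auto
    then obtain g where "g \<in> carrier G" "dist c (\<rho> g x) < real n" unfolding U_def by auto
    moreover have "real n \<le> real m" using m \<open>n \<in> N\<close> by simp
    ultimately show "\<exists>g\<in>carrier G. dist c (\<rho> g x) < real m" by force
  qed
qed

lemma fiber_bound:
  fixes \<rho>1 :: "'g \<Rightarrow> 'a::metric_space \<Rightarrow> 'a" and \<rho>2 :: "'g \<Rightarrow> 'b::metric_space \<Rightarrow> 'b"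
  assumes a1: "isometric_action G \<rho>1" and a2: "isometric_action G \<rho>2"
    and pd: "properly_discontinuous G \<rho>1" and pr: "proper_space TYPE('a)"
    and H: "\<And>y1 y2. (y1, y2) \<in> C \<Longrightarrow> \<exists>g\<in>carrier G. dist y1 (\<rho>1 g x1) < D \<and> dist y2 (\<rho>2 g x2) < D"
  shows "\<exists>M. \<forall>y1 y2 y2'. (y1, y2) \<in> C \<longrightarrow> (y1, y2') \<in> C \<longrightarrow> dist y2 y2' \<le> M"
proof -
  note F1 = iso_act_facts[OF a1] and F2 = iso_act_facts[OF a2]
  interpret group G by (rule F1(1))
  define K where "K = cball x1 (2 * D)"
  have "compact K" using pr unfolding proper_space_def K_def by blast
  then have fin: "finite {g \<in> carrier G. \<rho>1 g ` K \<inter> K \<noteq> {}}" (is "finite ?S")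
    using pd unfolding properly_discontinuous_def by blast
  define M0 where "M0 = (\<Sum>k\<in>?S. dist x2 (\<rho>2 k x2))"
  have M0: "dist x2 (\<rho>2 k x2) \<le> M0" if "k \<in> ?S" for k
    unfolding M0_def by (rule member_le_sum[OF that _ fin]) simp
  show ?thesis
  proof (intro exI allI impI)
    fix y1 y2 y2' assume p: "(y1, y2) \<in> C" and q: "(y1, y2') \<in> C"
    obtain g where g: "g \<in> carrier G" "dist y1 (\<rho>1 g x1) < D" "dist y2 (\<rho>2 g x2) < D"
      using H[OF p] by blast
    obtain h where h: "h \<in> carrier G" "dist y1 (\<rho>1 h x1) < D" "dist y2' (\<rho>2 h x2) < D"
      using H[OF q] by blast
    define k where "k = inv\<^bsub>G\<^esub> g \<otimes>\<^bsub>G\<^esub> h"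
    have k: "k \<in> carrier G" using g h by (simp add: k_def)
    have gk: "g \<otimes>\<^bsub>G\<^esub> k = h" using g h by (simp add: k_def m_assoc[symmetric])
    have r1: "\<rho>1 h x1 = \<rho>1 g (\<rho>1 k x1)" using F1(3)[OF g(1) k] gk by simp
    have r2: "\<rho>2 h x2 = \<rho>2 g (\<rho>2 k x2)" using F2(3)[OF g(1) k] gk by simp
    have "dist x1 (\<rho>1 k x1) = dist (\<rho>1 g x1) (\<rho>1 h x1)" using r1 F1(2)[OF g(1)] by simp
    also have "\<dots> \<le> dist (\<rho>1 g x1) y1 + dist y1 (\<rho>1 h x1)" by (rule dist_triangle)
    finally have d1: "dist x1 (\<rho>1 k x1) \<le> 2 * D" using g h by (simp add: dist_commute)
    have "D > 0" using g(2) by (meson le_less_trans zero_le_dist)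
    then have "x1 \<in> K" unfolding K_def by simp
    moreover have "\<rho>1 k x1 \<in> K" using d1 unfolding K_def by simp
    ultimately have "k \<in> ?S" using k by blast
    then have kM: "dist (\<rho>2 g x2) (\<rho>2 h x2) \<le> M0" using M0 r2 F2(2)[OF g(1)] by simp
    have "dist y2 y2' \<le> dist y2 (\<rho>2 g x2) + dist (\<rho>2 g x2) (\<rho>2 h x2) + dist (\<rho>2 h x2) y2'"
      using dist_triangle[of y2 y2' "\<rho>2 g x2"] dist_triangle[of "\<rho>2 g x2" y2' "\<rho>2 h x2"] by linarith
    then show "dist y2 y2' \<le> 2 * D + M0" using g h kM by (simp add: dist_commute)
  qed
qed

lemma assemble:
  fixes l1 :: "real \<Rightarrow> 'a::metric_space" and l2 :: "real \<Rightarrow> 'b::metric_space"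
  assumes gl1: "geodesic_line l1" and gl2: "geodesic_line l2"
    and Pdef: "\<And>a b. P a b \<longleftrightarrow> (l1 a, l2 b) \<in> C"
    and u: "u1\<^sup>2 + u2\<^sup>2 = 1"
    and rec: "\<And>a b t. P a b \<Longrightarrow> 0 \<le> t \<Longrightarrow> P (a + t * u1) (b + t * u2)"
    and p0: "P a0 b0"
    and str: "\<And>a b. P a b \<Longrightarrow> \<bar>(a - a0) * u2 - (b - b0) * u1\<bar> \<le> M"
  shows "(\<exists>r. geodesic_ray r \<and> r ` {0..} \<subseteq> range l1 \<times> range l2 \<and>
            finite_hausdorff_dist ((range l1 \<times> range l2) \<inter> C) (r ` {0..}))
       \<or> (\<exists>\<gamma>. geodesic_line \<gamma> \<and> range \<gamma> \<subseteq> range l1 \<times> range l2 \<and>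
            finite_hausdorff_dist ((range l1 \<times> range l2) \<inter> C) (range \<gamma>))"
proof -
  define S where "S a b = (a - a0) * u1 + (b - b0) * u2" for a b
  define W where "W a b = (a - a0) * u2 - (b - b0) * u1" for a b
  define \<gamma> where "\<gamma> \<sigma> = (l1 (a0 + \<sigma> * u1), l2 (b0 + \<sigma> * u2))" for \<sigma>
  have d\<gamma>: "dist (l1 a, l2 b) (\<gamma> \<sigma>) = sqrt ((W a b)\<^sup>2 + (S a b - \<sigma>)\<^sup>2)" for a b \<sigma>
    unfolding \<gamma>_def distF[OF gl1 gl2] key_id[OF u] S_def W_def ..
  have Wb: "P a b \<Longrightarrow> \<bar>W a b\<bar> \<le> M" for a b using str unfolding W_def by blast
  have M0: "0 \<le> M" using Wb[OF p0] by simp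
  have dW: "P a b \<Longrightarrow> dist (l1 a, l2 b) (\<gamma> (S a b)) \<le> M" for a b
    using Wb[of a b] by (simp add: d\<gamma>)
  have Fmem: "y \<in> (range l1 \<times> range l2) \<inter> C \<longleftrightarrow> (\<exists>a b. y = (l1 a, l2 b) \<and> P a b)" for y
    using Pdef by auto
  have geo: "dist (\<gamma> s) (\<gamma> t) = \<bar>s - t\<bar>" for s t
  proof -
    have "(a0 + s * u1 - (a0 + t * u1))\<^sup>2 + (b0 + s * u2 - (b0 + t * u2))\<^sup>2 = (s - t)\<^sup>2"
      using u by algebra
    then show ?thesis unfolding \<gamma>_def distF[OF gl1 gl2] by simp
  qed
  have shift: "P (a + \<tau> * u1) (b + \<tau> * u2) \<and> S (a + \<tau> * u1) (b + \<tau> * u2) = S a b + \<tau>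
      \<and> W (a + \<tau> * u1) (b + \<tau> * u2) = W a b" if "P a b" "0 \<le> \<tau>" for a b \<tau>
  proof -
    have "S (a + \<tau> * u1) (b + \<tau> * u2) = S a b + \<tau> * (u1\<^sup>2 + u2\<^sup>2)"
      unfolding S_def by (simp add: algebra_simps power2_eq_square)
    moreover have "W (a + \<tau> * u1) (b + \<tau> * u2) = W a b"
      unfolding W_def by (simp add: algebra_simps)
    ultimately show ?thesis using rec[OF that] u by simp
  qed
  show ?thesis
  proof (cases "\<forall>\<sigma>. \<exists>a b. P a b \<and> S a b \<le> \<sigma>")
    case True
    have "geodesic_line \<gamma>" unfolding geodesic_line_def using geo by blast
    moreover have "range \<gamma> \<subseteq> range l1 \<times> range l2" unfolding \<gamma>_def by auto
    moreover have "finite_hausdorff_dist ((range l1 \<times> range l2) \<inter> C) (range \<gamma>)"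
      unfolding finite_hausdorff_dist_def
    proof (intro exI conjI ballI)
      fix y assume "y \<in> (range l1 \<times> range l2) \<inter> C"
      then obtain a b where "y = (l1 a, l2 b)" "P a b" using Fmem by blast
      then show "\<exists>z\<in>range \<gamma>. dist y z \<le> M" using dW by blast
    next
      fix z assume "z \<in> range \<gamma>"
      then obtain \<sigma> where z: "z = \<gamma> \<sigma>" by blast
      obtain a b where ab: "P a b" "S a b \<le> \<sigma>" using True by blast
      define a' where "a' = a + (\<sigma> - S a b) * u1"
      define b' where "b' = b + (\<sigma> - S a b) * u2"
      have sh: "P a' b'" "S a' b' = \<sigma>" "W a' b' = W a b"
        using shift[OF ab(1), of "\<sigma> - S a b"] ab(2) unfolding a'_def b'_def by auto
      have "dist (l1 a', l2 b') z \<le> M" using dW[OF sh(1)] sh(2) z by simp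
      moreover have "(l1 a', l2 b') \<in> (range l1 \<times> range l2) \<inter> C" using sh(1) Fmem by blast
      ultimately show "\<exists>y\<in>(range l1 \<times> range l2) \<inter> C. dist y z \<le> M" by blast
    qed
    ultimately show ?thesis by blast
  next
    case False
    then obtain \<sigma>1 where lb: "\<And>a b. P a b \<Longrightarrow> \<sigma>1 < S a b" by (meson not_le)
    define X where "X = {S a b | a b. P a b}"
    have Xne: "X \<noteq> {}" using p0 unfolding X_def by blast
    have Xbdd: "bdd_below X" unfolding X_def bdd_below_def using lb by (auto intro: less_imp_le)
    define s0 where "s0 = Inf X"
    have s0le: "P a b \<Longrightarrow> s0 \<le> S a b" for a b
      unfolding s0_def by (rule cInf_lower[OF _ Xbdd]) (auto simp: X_def)
    define r where "r t = \<gamma> (s0 + t)" for t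
    have "geodesic_ray r" unfolding geodesic_ray_def r_def using geo by simp
    moreover have "r ` {0..} \<subseteq> range l1 \<times> range l2" unfolding r_def \<gamma>_def by auto
    moreover have "finite_hausdorff_dist ((range l1 \<times> range l2) \<inter> C) (r ` {0..})"
      unfolding finite_hausdorff_dist_def
    proof (intro exI[of _ "M + 1"] conjI ballI)
      fix y assume "y \<in> (range l1 \<times> range l2) \<inter> C"
      then obtain a b where y: "y = (l1 a, l2 b)" "P a b" using Fmem by blast
      have "r (S a b - s0) = \<gamma> (S a b)" unfolding r_def by simp
      moreover have "S a b - s0 \<in> {0..}" using s0le[OF y(2)] by simp
      ultimately have "\<gamma> (S a b) \<in> r ` {0..}" by (metis image_eqI)
      moreover have "dist y (\<gamma> (S a b)) \<le> M + 1" using dW[OF y(2)] y(1) by simp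
      ultimately show "\<exists>z\<in>r ` {0..}. dist y z \<le> M + 1" by blast
    next
      fix z assume "z \<in> r ` {0..}"
      then obtain t where t: "0 \<le> t" "z = \<gamma> (s0 + t)" unfolding r_def by auto
      have "Inf X < s0 + t + 1" using t(1) unfolding s0_def by simp
      then obtain xx where "xx \<in> X" "xx < s0 + t + 1" using cInf_less_iff[OF Xne Xbdd] by blast
      then obtain a b where ab: "P a b" "S a b < s0 + t + 1" unfolding X_def by blast
      show "\<exists>y\<in>(range l1 \<times> range l2) \<inter> C. dist y z \<le> M + 1"
      proof (cases "S a b \<le> s0 + t")
        case True
        define a' where "a' = a + (s0 + t - S a b) * u1"
        define b' where "b' = b + (s0 + t - S a b) * u2"
        have sh: "P a' b'" "S a' b' = s0 + t"
          using shift[OF ab(1), of "s0 + t - S a b"] True unfolding a'_def b'_def by auto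
        have "dist (l1 a', l2 b') z \<le> M" using dW[OF sh(1)] sh(2) t by simp
        moreover have "(l1 a', l2 b') \<in> (range l1 \<times> range l2) \<inter> C" using sh(1) Fmem by blast
        ultimately show ?thesis by force
      next
        case False
        have "dist (l1 a, l2 b) z = sqrt ((W a b)\<^sup>2 + (S a b - (s0 + t))\<^sup>2)" using t d\<gamma> by simp
        also have "\<dots> \<le> \<bar>W a b\<bar> + \<bar>S a b - (s0 + t)\<bar>" by (rule sqrt_sum_le)
        also have "\<dots> \<le> M + 1" using Wb[OF ab(1)] False ab(2) by simp
        finally have "dist (l1 a, l2 b) z \<le> M + 1" .
        moreover have "(l1 a, l2 b) \<in> (range l1 \<times> range l2) \<inter> C" using ab(1) Fmem by blast
        ultimately show ?thesis by blast
      qed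
    qed
    ultimately show ?thesis by blast
  qed
qed

lemma sqrt_scale: "sqrt ((x * p)\<^sup>2 + (x * q)\<^sup>2) = \<bar>x\<bar> * sqrt (p\<^sup>2 + q\<^sup>2)"
proof -
  have "(x * p)\<^sup>2 + (x * q)\<^sup>2 = x\<^sup>2 * (p\<^sup>2 + q\<^sup>2)" by (simp add: algebra_simps power_mult_distrib)
  then show ?thesis by (simp add: real_sqrt_mult)
qed

theorem lemma3p1:
  fixes G :: "('g, 'm) monoid_scheme"
    and \<rho>1 :: "'g \<Rightarrow> 'a::metric_space \<Rightarrow> 'a"
    and \<rho>2 :: "'g \<Rightarrow> 'b::metric_space \<Rightarrow> 'b"
    and C :: "('a \<times> 'b) set"
    and x1 :: 'a and x2 :: 'b
    and l1 :: "real \<Rightarrow> 'a" and l2 :: "real \<Rightarrow> 'b"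
  assumes "proper_space TYPE('a)" and "CAT0 TYPE('a)"
    and "proper_space TYPE('b)" and "CAT0 TYPE('b)"
    and "group G" and "infinite (carrier G)"
    and "convex_cocompact G \<rho>1" and "convex_cocompact G \<rho>2"
    and "convex_cocompact G (diagonal_action \<rho>1 \<rho>2)"
    and "convex_cocompact_witness G (diagonal_action \<rho>1 \<rho>2) C"
    and "(x1, x2) \<in> C"
    and "geodesic_line l1" and "x1 \<in> range l1"
    and "geodesic_line l2" and "x2 \<in> range l2"
    and "\<not> bounded ((range l1 \<times> range l2) \<inter> C)"
  shows "(\<exists>r. geodesic_ray r \<and> r ` {0..} \<subseteq> range l1 \<times> range l2 \<and>
            finite_hausdorff_dist ((range l1 \<times> range l2) \<inter> C) (r ` {0..}))
       \<or> (\<exists>\<gamma>. geodesic_line \<gamma> \<and> range \<gamma> \<subseteq> range l1 \<times> range l2 \<and>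
            finite_hausdorff_dist ((range l1 \<times> range l2) \<inter> C) (range \<gamma>))"
proof -
  note pr1 = assms(1) and pr2 = assms(3) and W = assms(10) and x = assms(11)
    and gl1 = assms(12) and gl2 = assms(14) and unbC = assms(16)
  obtain a0 where a0: "x1 = l1 a0" using assms(13) by blast
  obtain b0 where b0: "x2 = l2 b0" using assms(15) by blast
  define P where "P a b \<longleftrightarrow> (l1 a, l2 b) \<in> C" for a b
  have act1: "isometric_action G \<rho>1" and pd1: "properly_discontinuous G \<rho>1"
    using assms(7) unfolding convex_cocompact_def by auto
  have act2: "isometric_action G \<rho>2" and pd2: "properly_discontinuous G \<rho>2"
    using assms(8) unfolding convex_cocompact_def by auto
  have actd: "isometric_action G (diagonal_action \<rho>1 \<rho>2)"
    using assms(9) unfolding convex_cocompact_def by auto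
  have clC: "closed C" and cvC: "convex_in C"
    using W unfolding convex_cocompact_witness_def by auto
  obtain D where D: "\<forall>c\<in>C. \<exists>g\<in>carrier G. dist c (diagonal_action \<rho>1 \<rho>2 g (x1, x2)) < D"
    using cover_bound[OF actd W x] by blast
  have H: "\<exists>g\<in>carrier G. dist y1 (\<rho>1 g x1) < D \<and> dist y2 (\<rho>2 g x2) < D" if yC: "(y1, y2) \<in> C" for y1 y2
  proof -
    obtain g where g0: "g \<in> carrier G" "dist (y1, y2) (diagonal_action \<rho>1 \<rho>2 g (x1, x2)) < D"
      using D yC by blast
    then have g: "g \<in> carrier G" "dist (y1, y2) (\<rho>1 g x1, \<rho>2 g x2) < D"
      unfolding diagonal_action_def by simp_all
    have "dist y1 (\<rho>1 g x1) < D" using dist_fst_le[of "(y1, y2)" "(\<rho>1 g x1, \<rho>2 g x2)"] g(2) by simp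
    moreover have "dist y2 (\<rho>2 g x2) < D" using dist_snd_le[of "(y1, y2)" "(\<rho>1 g x1, \<rho>2 g x2)"] g(2) by simp
    ultimately show ?thesis using g(1) by blast
  qed
  obtain M1 where M1: "\<forall>y1 y2 y2'. (y1, y2) \<in> C \<longrightarrow> (y1, y2') \<in> C \<longrightarrow> dist y2 y2' \<le> M1"
    using fiber_bound[OF act1 act2 pd1 pr1 H] by blast
  have H': "\<exists>g\<in>carrier G. dist y2 (\<rho>2 g x2) < D \<and> dist y1 (\<rho>1 g x1) < D"
    if sw: "(y2, y1) \<in> prod.swap ` C" for y1 y2
  proof -
    obtain c where c: "c \<in> C" "(y2, y1) = prod.swap c" using sw by blast
    then have "c = (y1, y2)" by (cases c) simp
    then show ?thesis using H[of y1 y2] c(1) by blast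
  qed
  obtain M2 where M2: "\<forall>y2 y1 y1'. (y2, y1) \<in> prod.swap ` C \<longrightarrow> (y2, y1') \<in> prod.swap ` C \<longrightarrow> dist y1 y1' \<le> M2"
    using fiber_bound[OF act2 act1 pd2 pr2 H'] by blast
  define M where "M = max M1 M2"
  have fib1: "\<bar>b - b'\<bar> \<le> M" if "P a b" "P a b'" for a b b'
  proof -
    have "dist (l2 b) (l2 b') \<le> M1" using M1 that unfolding P_def by blast
    then show ?thesis unfolding M_def gl_dist[OF gl2] by linarith
  qed
  have fib2: "\<bar>a - a'\<bar> \<le> M" if "P a b" "P a' b" for a a' b
  proof -
    have "(l2 b, l1 a) \<in> prod.swap ` C" using that(1) unfolding P_def by (rule image_eqI[rotated]) simp
    moreover have "(l2 b, l1 a') \<in> prod.swap ` C" using that(2) unfolding P_def by (rule image_eqI[rotated]) simp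
    ultimately have "dist (l1 a) (l1 a') \<le> M2" using M2 by blast
    then show ?thesis unfolding M_def gl_dist[OF gl1] by linarith
  qed
  have conv: "P (a + t * (a' - a)) (b + t * (b' - b))"
    if "P a b" "P a' b'" "0 \<le> t" "t \<le> 1" for a b a' b' t
  proof -
    define c where "c s = (l1 (a + s * (a' - a)), l2 (b + s * (b' - b)))" for s
    have "geodesic_path (l1 a, l2 b) (l1 a', l2 b') c"
      unfolding geodesic_path_def
    proof (intro conjI ballI)
      fix s s' :: real
      have "dist (c s) (c s') = sqrt (((s - s') * (a' - a))\<^sup>2 + ((s - s') * (b' - b))\<^sup>2)"
        unfolding c_def distF[OF gl1 gl2] by (simp add: algebra_simps)
      also have "\<dots> = \<bar>s - s'\<bar> * sqrt ((a - a')\<^sup>2 + (b - b')\<^sup>2)"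
        by (simp add: sqrt_scale power2_commute[of a' a] power2_commute[of b' b])
      finally show "dist (c s) (c s') = \<bar>s - s'\<bar> * dist (l1 a, l2 b) (l1 a', l2 b')"
        using distF[OF gl1 gl2] by simp
    qed (simp_all add: c_def)
    moreover have "(l1 a, l2 b) \<in> C" "(l1 a', l2 b') \<in> C" using that(1,2) unfolding P_def by auto
    ultimately have "c ` {0..1} \<subseteq> C" using cvC[unfolded convex_in_def, rule_format] by blast
    moreover have "t \<in> {0..1}" using that(3,4) by simp
    ultimately have "c t \<in> C" by blast
    then show ?thesis unfolding c_def P_def .
  qed
  have clo: "P a b" if "\<alpha> \<longlonglongrightarrow> a" "\<beta> \<longlonglongrightarrow> b" "eventually (\<lambda>n. P (\<alpha> n) (\<beta> n)) sequentially"
    for \<alpha> \<beta> a b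
  proof -
    have t1: "(\<lambda>n. l1 (\<alpha> n)) \<longlonglongrightarrow> l1 a"
    proof -
      have e: "(\<lambda>n. dist (l1 (\<alpha> n)) (l1 a)) = (\<lambda>n. dist (\<alpha> n) a)"
        by (simp add: gl_dist[OF gl1] dist_real_def)
      have "(\<lambda>n. dist (\<alpha> n) a) \<longlonglongrightarrow> 0" using that(1) tendsto_dist_iff by blast
      then show ?thesis using tendsto_dist_iff e by metis
    qed
    have t2: "(\<lambda>n. l2 (\<beta> n)) \<longlonglongrightarrow> l2 b"
    proof -
      have e: "(\<lambda>n. dist (l2 (\<beta> n)) (l2 b)) = (\<lambda>n. dist (\<beta> n) b)"
        by (simp add: gl_dist[OF gl2] dist_real_def)
      have "(\<lambda>n. dist (\<beta> n) b) \<longlonglongrightarrow> 0" using that(2) tendsto_dist_iff by blast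
      then show ?thesis using tendsto_dist_iff e by metis
    qed
    have tt: "(\<lambda>n. (l1 (\<alpha> n), l2 (\<beta> n))) \<longlonglongrightarrow> (l1 a, l2 b)" by (rule tendsto_Pair[OF t1 t2])
    have ev: "eventually (\<lambda>n. (l1 (\<alpha> n), l2 (\<beta> n)) \<in> C) sequentially" using that(3) unfolding P_def .
    show ?thesis unfolding P_def by (rule Lim_in_closed_set[OF clC ev trivial_limit_sequentially tt])
  qed
  have unb: "\<exists>a b. P a b \<and> sqrt ((a - a0)\<^sup>2 + (b - b0)\<^sup>2) > e" for e
  proof (rule ccontr)
    assume "\<not> ?thesis"
    then have ne: "\<And>a b. P a b \<Longrightarrow> sqrt ((a - a0)\<^sup>2 + (b - b0)\<^sup>2) \<le> e" by (meson not_less)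
    have "\<forall>y\<in>(range l1 \<times> range l2) \<inter> C. dist (x1, x2) y \<le> e"
    proof
      fix y assume "y \<in> (range l1 \<times> range l2) \<inter> C"
      then obtain a b where y: "y = (l1 a, l2 b)" "P a b" unfolding P_def by auto
      have "dist (x1, x2) y = sqrt ((a - a0)\<^sup>2 + (b - b0)\<^sup>2)"
        unfolding y a0 b0 distF[OF gl1 gl2] by (simp add: power2_commute[of a0 a] power2_commute[of b0 b])
      then show "dist (x1, x2) y \<le> e" using ne[OF y(2)] by simp
    qed
    then show False using unbC unfolding bounded_def by blast
  qed
  have p0: "P a0 b0" using x a0 b0 P_def by simp
  obtain u1 u2 where u: "u1\<^sup>2 + u2\<^sup>2 = 1" and rec: "\<And>a b t. P a b \<Longrightarrow> 0 \<le> t \<Longrightarrow> P (a + t * u1) (b + t * u2)"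
  proof -
    have "\<exists>u1 u2. u1\<^sup>2 + u2\<^sup>2 = 1 \<and> (\<forall>a b t. P a b \<longrightarrow> 0 \<le> t \<longrightarrow> P (a + t * u1) (b + t * u2))"
      apply (rule recession[of P a0 b0])
        apply (rule conv; assumption)
       apply (rule clo; assumption)
      apply (rule unb)
      done
    then show ?thesis using that by blast
  qed
  have str: "\<bar>(a - a0) * u2 - (b - b0) * u1\<bar> \<le> M" if "P a b" for a b
    by (rule strip[OF rec u p0 fib1 fib2 that]) auto
  show ?thesis
    by (rule assemble[OF gl1 gl2 _ u rec p0 str]) (simp add: P_def)
qed

end
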